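(* Let $d\ge2$ and $r\ge 2$ be integers and let $G$ be a $d$-regular graph on $n$ vertices. Suppose each vertex is chosen as a seed independently with probability at most $1/4$. Then with probability $1-o(1)$ (as $n\to\infty$), it is not the case that all vertices become active within $\log_d\log n$ generations of threshold-$r$ bootstrap percolation; i.e., $A_t\neq V$ for $t=\lfloor\log_d\log n\rfloor$.
   Context: Bootstrap percolation with threshold $r\ge 2$ on a graph $G=(V,E)$: given a set $A_0\subseteq V$ of seeds, define for $i\ge1$ $A_i=A_{i-1}\cup\{v:|N(v)\cap A_{i-1}|\ge r\}$, where $N(v)$ is the set of neighbors of $v$. The number of generations until complete activation is the least $t$ with $A_t=V$. Logarithms are base 2 unless a base is indicated. *)

theory Defs
  imports Complex_Main
begin

definition simple_graph_on :: "nat \<Rightarrow> (nat \<Rightarrow> nat \<Rightarrow> bool) \<Rightarrow> bool" where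
  "simple_graph_on n E \<longleftrightarrow> (\<forall>u v. E u v \<longrightarrow> E v u) \<and> (\<forall>v. \<not> E v v)"

definition nbrs :: "nat \<Rightarrow> (nat \<Rightarrow> nat \<Rightarrow> bool) \<Rightarrow> nat \<Rightarrow> nat set" where
  "nbrs n E v = {u. u < n \<and> E v u}"

definition regular_graph :: "nat \<Rightarrow> nat \<Rightarrow> (nat \<Rightarrow> nat \<Rightarrow> bool) \<Rightarrow> bool" where
  "regular_graph d n E \<longleftrightarrow> simple_graph_on n E \<and> (\<forall>v<n. card (nbrs n E v) = d)"

definition bp_step :: "nat \<Rightarrow> (nat \<Rightarrow> nat \<Rightarrow> bool) \<Rightarrow> nat \<Rightarrow> nat set \<Rightarrow> nat set" where
  "bp_step n E r A = A \<union> {v. v < n \<and> card (nbrs n E v \<inter> A) \<ge> r}"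

definition bp_gen :: "nat \<Rightarrow> (nat \<Rightarrow> nat \<Rightarrow> bool) \<Rightarrow> nat \<Rightarrow> nat \<Rightarrow> nat set \<Rightarrow> nat set" where
  "bp_gen n E r t A0 = (bp_step n E r ^^ t) A0"

text \<open>Probability that the random seed set A_0 \<subseteq> {0..<n}, where each vertex v is included
  independently with probability p v, satisfies the event P.\<close>

definition seed_prob :: "nat \<Rightarrow> (nat \<Rightarrow> real) \<Rightarrow> (nat set \<Rightarrow> bool) \<Rightarrow> real" where
  "seed_prob n p P =
     (\<Sum>S\<in>Pow {0..<n}. if P S then (\<Prod>v\<in>S. p v) * (\<Prod>v\<in>{0..<n} - S. 1 - p v) else 0)"

end

theory Submission
  imports Defs "HOL-Real_Asymp.Real_Asymp"
begin

definition wt :: "(nat\<Rightarrow>real) \<Rightarrow> nat set \<Rightarrow> nat set \<Rightarrow> real" where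
 "wt p I S = (\<Prod>v\<in>S. p v) * (\<Prod>v\<in>I - S. 1 - p v)"
definition mu :: "(nat\<Rightarrow>real) \<Rightarrow> nat set \<Rightarrow> (nat set \<Rightarrow> bool) \<Rightarrow> real" where
 "mu p I P = (\<Sum>S\<in>Pow I. if P S then wt p I S else 0)"

lemma seed_prob_mu: "seed_prob n p P = mu p {0..<n} P"
  unfolding seed_prob_def mu_def wt_def ..

lemma wt_split:
  assumes "finite I" "B \<subseteq> I" "S \<subseteq> I"
  shows "wt p I S = wt p B (S \<inter> B) * wt p (I - B) (S - B)"
proof -
  have fS: "finite S" using assms finite_subset by blast
  have 1: "(\<Prod>v\<in>S. p v) = (\<Prod>v\<in>S\<inter>B. p v) * (\<Prod>v\<in>S-B. p v)"
    using prod.Int_Diff[OF fS] by blast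
  have 2: "(\<Prod>v\<in>I-S. 1 - p v) = (\<Prod>v\<in>(I-S)\<inter>B. 1 - p v) * (\<Prod>v\<in>(I-S)-B. 1 - p v)"
    using prod.Int_Diff assms by blast
  have 3: "(I-S)\<inter>B = B - S \<inter> B" "(I-S)-B = (I - B) - (S - B)" using assms by auto
  show ?thesis unfolding wt_def 1 2 3 by (simp add: algebra_simps)
qed

lemma mu_split:
  assumes "finite I" "B \<subseteq> I"
  shows "mu p I (\<lambda>S. F (S \<inter> B) \<and> G (S - B)) = mu p B F * mu p (I - B) G"
proof -
  let ?h = "\<lambda>S. if F (S \<inter> B) \<and> G (S - B) then wt p I S else 0"
  have bij: "bij_betw (\<lambda>(X,Y). X \<union> Y) (Pow B \<times> Pow (I - B)) (Pow I)"
    unfolding bij_betw_def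
  proof
    show "inj_on (\<lambda>(X, Y). X \<union> Y) (Pow B \<times> Pow (I - B))"
      by (auto simp: inj_on_def)
    show "(\<lambda>(X, Y). X \<union> Y) ` (Pow B \<times> Pow (I - B)) = Pow I"
    proof
      show "(\<lambda>(X, Y). X \<union> Y) ` (Pow B \<times> Pow (I - B)) \<subseteq> Pow I" using assms by auto
      show "Pow I \<subseteq> (\<lambda>(X, Y). X \<union> Y) ` (Pow B \<times> Pow (I - B))"
      proof
        fix S assume "S \<in> Pow I"
        then have "(S \<inter> B, S - B) \<in> Pow B \<times> Pow (I - B)" "S = (\<lambda>(X, Y). X \<union> Y) (S \<inter> B, S - B)"
          by auto
        then show "S \<in> (\<lambda>(X, Y). X \<union> Y) ` (Pow B \<times> Pow (I - B))" by blast
      qed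
    qed
  qed
  have "mu p I (\<lambda>S. F (S \<inter> B) \<and> G (S - B)) = sum ?h (Pow I)" by (simp add: mu_def)
  also have "\<dots> = (\<Sum>x\<in>Pow B \<times> Pow (I - B). ?h ((\<lambda>(X,Y). X \<union> Y) x))"
    using sum.reindex_bij_betw[OF bij, of ?h] by simp
  also have "\<dots> = (\<Sum>(X,Y)\<in>Pow B \<times> Pow (I - B). (if F X then wt p B X else 0) * (if G Y then wt p (I - B) Y else 0))"
  proof (rule sum.cong[OF refl])
    fix x assume "x \<in> Pow B \<times> Pow (I - B)"
    then obtain X Y where x: "x = (X, Y)" and XY: "X \<subseteq> B" "Y \<subseteq> I - B" by auto
    then have e: "(X \<union> Y) \<inter> B = X" "(X \<union> Y) - B = Y" by auto
    have "wt p I (X \<union> Y) = wt p B X * wt p (I - B) Y"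
      proof -
      have "X \<union> Y \<subseteq> I" using XY assms(2) by auto
      from wt_split[OF assms this, of p] show ?thesis by (simp add: e)
    qed
    then show "?h ((\<lambda>(X,Y). X \<union> Y) x) = (case x of (X,Y) \<Rightarrow> (if F X then wt p B X else 0) * (if G Y then wt p (I - B) Y else 0))"
      using e x by simp
  qed
  also have "\<dots> = mu p B F * mu p (I - B) G"
    unfolding mu_def sum_product by (rule sum.cartesian_product[symmetric])
  finally show ?thesis .
qed

lemma mu_total:
  assumes "finite I" shows "mu p I (\<lambda>_. True) = 1"
proof -
  have "(\<Prod>v\<in>I. p v + (1 - p v)) = (\<Sum>X\<in>Pow I. (\<Prod>v\<in>X. p v) * (\<Prod>v\<in>I - X. 1 - p v))"
    by (rule prod_add[OF assms])
  then show ?thesis by (simp add: mu_def wt_def)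
qed

lemma mu_empty:
  assumes "finite I" shows "mu p I (\<lambda>T. T = {}) = (\<Prod>v\<in>I. 1 - p v)"
proof -
  have "mu p I (\<lambda>T. T = {}) = (\<Sum>T\<in>Pow I. if T = {} then wt p I T else 0)" by (simp add: mu_def)
  also have "\<dots> = wt p I {}" using assms by (subst sum.delta) auto
  finally show ?thesis by (simp add: wt_def)
qed

lemma mu_compl: "mu p I P + mu p I (\<lambda>S. \<not> P S) = mu p I (\<lambda>_. True)"
  unfolding mu_def sum.distrib[symmetric] by (rule sum.cong) auto

lemma mu_cong: "(\<And>S. S \<subseteq> I \<Longrightarrow> P S = Q S) \<Longrightarrow> mu p I P = mu p I Q"
  unfolding mu_def by (rule sum.cong) auto

lemma mu_mono:
  assumes "\<And>v. v \<in> I \<Longrightarrow> 0 \<le> p v \<and> p v \<le> 1" "\<And>S. S \<subseteq> I \<Longrightarrow> P S \<Longrightarrow> Q S"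
  shows "mu p I P \<le> mu p I Q"
  unfolding mu_def
proof (rule sum_mono)
  fix S assume S: "S \<in> Pow I"
  have "0 \<le> wt p I S" unfolding wt_def
    using assms(1) S by (intro mult_nonneg_nonneg prod_nonneg) auto
  then show "(if P S then wt p I S else 0) \<le> (if Q S then wt p I S else 0)"
    using assms(2) S by auto
qed

lemma mu_hit_all:
  assumes "finite K" "finite I" "\<forall>c\<in>K. Bc c \<subseteq> I" "\<forall>c\<in>K. \<forall>c'\<in>K. c \<noteq> c' \<longrightarrow> Bc c \<inter> Bc c' = {}"
  shows "mu p I (\<lambda>S. \<forall>c\<in>K. S \<inter> Bc c \<noteq> {}) = (\<Prod>c\<in>K. 1 - (\<Prod>u\<in>Bc c. 1 - p u))"
  using assms
proof (induction K arbitrary: I rule: finite_induct)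
  case empty
  then show ?case using mu_total by simp
next
  case (insert c K)
  have BcI: "Bc c \<subseteq> I" using insert.prems(2) by simp
  have fB: "finite (Bc c)" using finite_subset[OF BcI insert.prems(1)] .
  have "mu p I (\<lambda>S. \<forall>c'\<in>insert c K. S \<inter> Bc c' \<noteq> {})
      = mu p I (\<lambda>S. (S \<inter> Bc c \<noteq> {}) \<and> (\<forall>c'\<in>K. (S - Bc c) \<inter> Bc c' \<noteq> {}))"
  proof (rule mu_cong)
    fix S
    have "\<forall>c'\<in>K. (S - Bc c) \<inter> Bc c' = S \<inter> Bc c'"
    proof
      fix c' assume "c' \<in> K"
      then have "Bc c \<inter> Bc c' = {}" using insert.prems(3) insert.hyps(2) by auto
      then show "(S - Bc c) \<inter> Bc c' = S \<inter> Bc c'" by blast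
    qed
    then show "(\<forall>c'\<in>insert c K. S \<inter> Bc c' \<noteq> {}) = (S \<inter> Bc c \<noteq> {} \<and> (\<forall>c'\<in>K. (S - Bc c) \<inter> Bc c' \<noteq> {}))"
      by auto
  qed
  also have "\<dots> = mu p (Bc c) (\<lambda>T. T \<noteq> {}) * mu p (I - Bc c) (\<lambda>S. \<forall>c'\<in>K. S \<inter> Bc c' \<noteq> {})"
    using mu_split[OF insert.prems(1), of "Bc c" p "\<lambda>T. T \<noteq> {}" "\<lambda>S. \<forall>c'\<in>K. S \<inter> Bc c' \<noteq> {}"]
      insert.prems(2) by simp
  also have "mu p (I - Bc c) (\<lambda>S. \<forall>c'\<in>K. S \<inter> Bc c' \<noteq> {}) = (\<Prod>c\<in>K. 1 - (\<Prod>u\<in>Bc c. 1 - p u))"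
  proof (rule insert.IH)
    show "finite (I - Bc c)" using insert.prems by simp
    show "\<forall>c\<in>K. \<forall>c'\<in>K. c \<noteq> c' \<longrightarrow> Bc c \<inter> Bc c' = {}" using insert.prems by blast
    show "\<forall>c'\<in>K. Bc c' \<subseteq> I - Bc c"
    proof
      fix c' assume "c' \<in> K"
      then have "Bc c \<inter> Bc c' = {}" "Bc c' \<subseteq> I" using insert.prems(2,3) insert.hyps(2) by auto
      then show "Bc c' \<subseteq> I - Bc c" by blast
    qed
  qed
  also have "mu p (Bc c) (\<lambda>T. T \<noteq> {}) = 1 - (\<Prod>u\<in>Bc c. 1 - p u)"
    using mu_compl[of p "Bc c" "\<lambda>T. T = {}"] mu_total[OF fB, of p] mu_empty[OF fB, of p] by simp
  finally show ?case using insert.hyps by simp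
qed

fun ball :: "nat \<Rightarrow> (nat\<Rightarrow>nat\<Rightarrow>bool) \<Rightarrow> nat \<Rightarrow> nat \<Rightarrow> nat set" where
  "ball n E v 0 = {v}"
| "ball n E v (Suc t) = insert v (\<Union>w\<in>nbrs n E v. ball n E w t)"

lemma ball_self: "v \<in> ball n E v t"
  by (cases t) auto

lemma ball_mono: "ball n E v t \<subseteq> ball n E v (Suc t)"
proof (induction t arbitrary: v)
  case 0 then show ?case by auto
next
  case (Suc t)
  have "(\<Union>w\<in>nbrs n E v. ball n E w t) \<subseteq> (\<Union>w\<in>nbrs n E v. ball n E w (Suc t))"
    using Suc.IH by blast
  then show ?case by auto
qed

lemma nbrs_sub: "nbrs n E v \<subseteq> {0..<n}" by (auto simp: nbrs_def)

lemma finite_nbrs: "finite (nbrs n E v)" using finite_subset[OF nbrs_sub] by simp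

lemma ball_sub: "v < n \<Longrightarrow> ball n E v t \<subseteq> {0..<n}"
proof (induction t arbitrary: v)
  case 0 then show ?case by auto
next
  case (Suc t)
  have "\<And>w. w \<in> nbrs n E v \<Longrightarrow> ball n E w t \<subseteq> {0..<n}"
    using Suc.IH by (auto simp: nbrs_def)
  then show ?case using Suc.prems by auto
qed

lemma finite_ball: "finite (ball n E v t)"
  by (induction t arbitrary: v) (auto simp: finite_nbrs)

lemma bp_gen_Suc: "bp_gen n E r (Suc t) A = bp_step n E r (bp_gen n E r t A)"
  by (simp add: bp_gen_def)

lemma active_seed:
  assumes "r \<ge> 1"
  shows "u \<in> bp_gen n E r t S \<Longrightarrow> S \<inter> ball n E u t \<noteq> {}"
proof (induction t arbitrary: u)
  case 0 then show ?case by (auto simp: bp_gen_def)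
next
  case (Suc t)
  show ?case
  proof (cases "u \<in> bp_gen n E r t S")
    case True
    then show ?thesis using Suc.IH ball_mono by blast
  next
    case False
    then have "card (nbrs n E u \<inter> bp_gen n E r t S) \<ge> r"
      using Suc.prems by (auto simp: bp_gen_Suc bp_step_def)
    then have "nbrs n E u \<inter> bp_gen n E r t S \<noteq> {}" using assms by auto
    then obtain w where w: "w \<in> nbrs n E u" "w \<in> bp_gen n E r t S" by blast
    then have "S \<inter> ball n E w t \<noteq> {}" using Suc.IH by blast
    moreover have "ball n E w t \<subseteq> ball n E u (Suc t)" using w by auto
    ultimately show ?thesis by blast
  qed
qed

fun Sz :: "nat \<Rightarrow> nat \<Rightarrow> nat" where
  "Sz d 0 = 1"
| "Sz d (Suc t) = 1 + d * Sz d t"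

lemma card_ball:
  assumes "regular_graph d n E"
  shows "v < n \<Longrightarrow> card (ball n E v t) \<le> Sz d t"
proof (induction t arbitrary: v)
  case 0 then show ?case by simp
next
  case (Suc t)
  have "card (ball n E v (Suc t)) \<le> 1 + card (\<Union>w\<in>nbrs n E v. ball n E w t)"
    by (simp add: card_insert_le_m1 card_insert_if)
  also have "card (\<Union>w\<in>nbrs n E v. ball n E w t) \<le> (\<Sum>w\<in>nbrs n E v. card (ball n E w t))"
    by (rule card_UN_le[OF finite_nbrs])
  also have "\<dots> \<le> (\<Sum>w\<in>nbrs n E v. Sz d t)"
    by (rule sum_mono) (use Suc.IH in \<open>auto simp: nbrs_def\<close>)
  also have "\<dots> = d * Sz d t"
    using assms Suc.prems by (simp add: regular_graph_def)
  finally show ?case by simp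
qed

lemma Sz_eq: "e * Sz (Suc e) t + 1 = (Suc e) ^ Suc t"
proof (induction t)
  case 0 then show ?case by simp
next
  case (Suc t)
  have "e * Sz (Suc e) (Suc t) + 1 = Suc e * (e * Sz (Suc e) t + 1)" by (simp add: algebra_simps)
  also have "\<dots> = Suc e ^ Suc (Suc t)" using Suc.IH by simp
  finally show ?case .
qed

lemma Sz_le: assumes "d \<ge> 2" shows "Sz d t \<le> 2 * d ^ t"
proof -
  obtain e where e: "d = Suc e" "e \<ge> 1" using assms by (cases d) auto
  have "e * Sz d t < d * d ^ t" using Sz_eq[of e t] e by simp
  also have "\<dots> \<le> e * (2 * d ^ t)" using e by simp
  finally show ?thesis by simp
qed

lemma ball_ext: "w \<in> ball n E x t \<Longrightarrow> v \<in> nbrs n E w \<Longrightarrow> v \<in> ball n E x (Suc t)"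
proof (induction t arbitrary: x)
  case 0 then show ?case by auto
next
  case (Suc t)
  show ?case
  proof (cases "w = x")
    case True
    then show ?thesis using Suc.prems ball_self[of v n E "Suc t"] by auto
  next
    case False
    then obtain y where y: "y \<in> nbrs n E x" "w \<in> ball n E y t" using Suc.prems by auto
    then have "v \<in> ball n E y (Suc t)" using Suc.IH Suc.prems by blast
    then show ?thesis using y by auto
  qed
qed

lemma ball_sym:
  assumes "simple_graph_on n E"
  shows "v < n \<Longrightarrow> x \<in> ball n E v t \<Longrightarrow> v \<in> ball n E x t"
proof (induction t arbitrary: v x)
  case 0 then show ?case by auto
next
  case (Suc t)
  show ?case
  proof (cases "x = v")
    case True then show ?thesis by (simp add: ball_self)
  next
    case False
    then obtain w where w: "w \<in> nbrs n E v" "x \<in> ball n E w t" using Suc.prems by auto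
    then have "w < n" by (simp add: nbrs_def)
    then have "w \<in> ball n E x t" using Suc.IH w by blast
    moreover have "v \<in> nbrs n E w" using w Suc.prems assms by (auto simp: nbrs_def simple_graph_on_def)
    ultimately show ?thesis by (rule ball_ext)
  qed
qed

lemma greedy:
  fixes conf :: "nat \<Rightarrow> nat \<Rightarrow> bool"
  assumes "finite V" "\<And>c. conf c c" "\<And>a b. conf a b \<Longrightarrow> conf b a"
    "\<And>c. c \<in> V \<Longrightarrow> card {v\<in>V. conf c v} \<le> M"
  shows "\<exists>K\<subseteq>V. card V \<le> card K * M \<and> (\<forall>a\<in>K. \<forall>b\<in>K. a \<noteq> b \<longrightarrow> \<not> conf a b)"
  using assms(1,4)
proof (induction "card V" arbitrary: V rule: less_induct)
  case less
  show ?case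
  proof (cases "V = {}")
    case True then show ?thesis by auto
  next
    case False
    then obtain c where c: "c \<in> V" by blast
    define C where "C = {v\<in>V. conf c v}"
    define V' where "V' = V - C"
    have cC: "c \<in> C" using c assms(2) by (simp add: C_def)
    have fV': "finite V'" using less.prems by (simp add: V'_def)
    have CV: "C \<subseteq> V" by (auto simp: C_def)
    have cardV: "card V = card V' + card C"
      using card_Diff_subset[OF finite_subset[OF CV less.prems(1)] CV] card_mono[OF less.prems(1) CV]
      by (simp add: V'_def)
    have "card C > 0" using cC finite_subset[OF CV less.prems(1)] by (auto simp: card_gt_0_iff)
    then have lt: "card V' < card V" using cardV by linarith
    have bd:  "\<And>c'. c' \<in> V' \<Longrightarrow> card {v\<in>V'. conf c' v} \<le> M"
    proof -
      fix c' assume "c' \<in> V'"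
      then have "c' \<in> V" by (simp add: V'_def)
      have "card {v\<in>V'. conf c' v} \<le> card {v\<in>V. conf c' v}"
        by (rule card_mono) (use less.prems in \<open>auto simp: V'_def\<close>)
      then show "card {v\<in>V'. conf c' v} \<le> M" using less.prems(2)[OF \<open>c' \<in> V\<close>] by simp
    qed
    from less.hyps[OF lt fV' bd] obtain K' where K': "K' \<subseteq> V'" "card V' \<le> card K' * M"
        "\<forall>a\<in>K'. \<forall>b\<in>K'. a \<noteq> b \<longrightarrow> \<not> conf a b"
      by blast
    have cK': "c \<notin> K'" using K'(1) cC by (auto simp: V'_def)
    have fK': "finite K'" using finite_subset[OF K'(1) fV'] .
    have nc: "\<And>b. b \<in> K' \<Longrightarrow> \<not> conf c b" using K'(1) c by (auto simp: V'_def C_def)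
    have cCM: "card C \<le> M" unfolding C_def using less.prems(2)[OF c] .
    have "card V \<le> card K' * M + M" using cardV K'(2) cCM by linarith
    also have "\<dots> = card (insert c K') * M" using cK' fK' by simp
    finally have "card V \<le> card (insert c K') * M" .
    moreover have "insert c K' \<subseteq> V" using K'(1) c by (auto simp: V'_def)
    moreover have "\<forall>a\<in>insert c K'. \<forall>b\<in>insert c K'. a \<noteq> b \<longrightarrow> \<not> conf a b"
    proof (intro ballI impI)
      fix a b assume ab: "a \<in> insert c K'" "b \<in> insert c K'" "a \<noteq> b"
      show "\<not> conf a b"
      proof (cases "a = c")
        case True then show ?thesis using ab nc by auto
      next
        case False
        show ?thesis
        proof (cases "b = c")
          case True
          then have "\<not> conf b a" using ab False nc by auto
          then show ?thesis using assms(3) by blast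
        next
          case False
          then show ?thesis using ab \<open>a \<noteq> c\<close> K'(3) by auto
        qed
      qed
    qed
    ultimately have "insert c K' \<subseteq> V \<and> card V \<le> card (insert c K') * M \<and>
      (\<forall>a\<in>insert c K'. \<forall>b\<in>insert c K'. a \<noteq> b \<longrightarrow> \<not> conf a b)" by simp
    then show ?thesis by (rule exI)
  qed
qed


lemma num_ineq: "(2::real) powr (-9) \<le> (3/4) powr 20"
  by (simp add: powr_minus powr_realpow power_divide)

lemma main_bound:
  fixes d r n :: nat
  assumes d2: "d \<ge> 2" and r2: "r \<ge> 2" and n2: "n \<ge> 2"
    and reg: "regular_graph d n E" and pb: "\<forall>v<n. 0 \<le> p v \<and> p v \<le> 1/4"
  shows "seed_prob n p (\<lambda>A0. bp_gen n E r (nat \<lfloor>log (real d) (log 2 (real n))\<rfloor>) A0 = {0..<n})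
         \<le> exp (- (real n powr (-9/10) * real n / (4 * (log 2 (real n))^2)))"
proof -
  define L where "L = log 2 (real n)"
  define t where "t = nat \<lfloor>log (real d) L\<rfloor>"
  have npos: "real n > 0" using n2 by simp
  have L1: "L \<ge> 1"
  proof -
    have "log 2 (2::real) \<le> log 2 (real n)" using n2 by (intro log_mono) auto
    then show ?thesis by (simp add: L_def)
  qed
  have lg0: "log (real d) L \<ge> 0" using d2 L1 by (subst zero_le_log_cancel_iff) auto
  have tle: "real t \<le> log (real d) L" using lg0 by (simp add: t_def)
  have dt: "real d ^ t \<le> L"
  proof -
    have "real d ^ t = real d powr real t" using d2 by (simp add: powr_realpow)
    also have "\<dots> \<le> real d powr (log (real d) L)" using tle d2 by (intro powr_mono) auto
    also have "\<dots> = L" using d2 L1 by simp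
    finally show ?thesis .
  qed
  have SzL: "real (Sz d t) \<le> 2 * L"
  proof -
    have "real (Sz d t) \<le> real (2 * d ^ t)" using Sz_le[OF d2, of t] by linarith
    then show ?thesis using dt by simp
  qed
  define B where "B c = ball n E c t" for c
  define conf where "conf a b \<longleftrightarrow> B a \<inter> B b \<noteq> {}" for a b
  define M where "M = Sz d t * Sz d t"
  have simple: "simple_graph_on n E" using reg by (simp add: regular_graph_def)
  have Bsub: "\<And>c. c < n \<Longrightarrow> B c \<subseteq> {0..<n}" by (simp add: B_def ball_sub)
  have cardB: "\<And>c. c < n \<Longrightarrow> card (B c) \<le> Sz d t" by (simp add: B_def card_ball[OF reg])
  have confM: "card {v\<in>{0..<n}. conf c v} \<le> M" if c: "c \<in> {0..<n}" for c
  proof -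
    have "{v\<in>{0..<n}. conf c v} \<subseteq> (\<Union>x\<in>B c. B x)"
    proof
      fix v assume "v \<in> {v\<in>{0..<n}. conf c v}"
      then obtain x where x: "x \<in> B c" "x \<in> B v" "v < n" by (auto simp: conf_def)
      then have "v \<in> B x" using ball_sym[OF simple] by (simp add: B_def)
      then show "v \<in> (\<Union>x\<in>B c. B x)" using x by blast
    qed
    then have "card {v\<in>{0..<n}. conf c v} \<le> card (\<Union>x\<in>B c. B x)"
      by (intro card_mono) (auto simp: B_def finite_ball)
    also have "\<dots> \<le> (\<Sum>x\<in>B c. card (B x))" by (intro card_UN_le) (simp add: B_def finite_ball)
    also have "\<dots> \<le> (\<Sum>x\<in>B c. Sz d t)"
    proof (rule sum_mono)
      fix x assume "x \<in> B c"
      moreover have "B c \<subseteq> {0..<n}" using Bsub c by simp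
      ultimately have "x < n" by auto
      then show "card (B x) \<le> Sz d t" by (rule cardB)
    qed
    also have "\<dots> = card (B c) * Sz d t" by simp
    also have "\<dots> \<le> M" unfolding M_def using cardB c by simp
    finally show ?thesis .
  qed
  obtain K where K: "K \<subseteq> {0..<n}" "card {0..<n} \<le> card K * M"
      "\<forall>a\<in>K. \<forall>b\<in>K. a \<noteq> b \<longrightarrow> \<not> conf a b"
  proof -
    have "\<exists>K\<subseteq>{0..<n}. card {0..<n} \<le> card K * M \<and> (\<forall>a\<in>K. \<forall>b\<in>K. a \<noteq> b \<longrightarrow> \<not> conf a b)"
    proof (rule greedy)
      show "finite {0..<n}" by simp
      show "\<And>c. conf c c" unfolding conf_def B_def using ball_self by blast
      show "\<And>a b. conf a b \<Longrightarrow> conf b a" by (auto simp: conf_def)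
      show "\<And>c. c \<in> {0..<n} \<Longrightarrow> card {v \<in> {0..<n}. conf c v} \<le> M" by (rule confM)
    qed
    then show ?thesis using that by blast
  qed
  have fK: "finite K" using finite_subset[OF K(1)] by simp
  define q where "q = (3/4::real) powr (2 * L)"
  have "q \<le> (3/4) powr 0" unfolding q_def using L1 by (intro powr_mono') auto
  then have q0: "0 \<le> q" "q \<le> 1" by (auto simp: q_def)
  have fac: "0 \<le> 1 - (\<Prod>u\<in>B c. 1 - p u) \<and> 1 - (\<Prod>u\<in>B c. 1 - p u) \<le> 1 - q" if c: "c \<in> K" for c
  proof -
    have cn: "c < n" using c K(1) by auto
    have pu: "\<And>u. u \<in> B c \<Longrightarrow> 0 \<le> p u \<and> p u \<le> 1/4" using Bsub[OF cn] pb by auto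
    have "(\<Prod>u\<in>B c. 1 - p u) \<le> 1"
    proof (rule prod_le_1)
      fix u assume "u \<in> B c"
      then have "0 \<le> p u \<and> p u \<le> 1/4" by (rule pu)
      then show "0 \<le> 1 - p u \<and> 1 - p u \<le> 1" by linarith
    qed
    moreover have "q \<le> (\<Prod>u\<in>B c. 1 - p u)"
    proof -
      have "q \<le> (3/4) powr real (card (B c))"
        unfolding q_def using cardB[OF cn] SzL by (intro powr_mono') auto
      also have "\<dots> = (\<Prod>u\<in>B c. 3/4)" by (simp add: powr_realpow)
      also have "\<dots> \<le> (\<Prod>u\<in>B c. 1 - p u)" using pu by (intro prod_mono) auto
      finally show ?thesis .
    qed
    ultimately show ?thesis by linarith
  qed
  have cardK: "real n / (4 * L^2) \<le> real (card K)"
  proof -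
    have "real n \<le> real (card K) * real M" using K(2) by (metis card_atLeastLessThan diff_zero of_nat_le_iff of_nat_mult)
    also have "real M \<le> 4 * L^2"
    proof -
      have "real M = real (Sz d t) * real (Sz d t)" by (simp add: M_def)
      also have "\<dots> \<le> (2 * L) * (2 * L)" using SzL by (intro mult_mono) auto
      finally show ?thesis by (simp add: power2_eq_square)
    qed
    then have "real (card K) * real M \<le> real (card K) * (4 * L^2)" by (intro mult_left_mono) auto
    finally show ?thesis using L1 by (simp add: divide_le_eq mult.commute)
  qed
  have qn: "real n powr (-9/10) \<le> q"
  proof -
    have n2L: "real n = 2 powr L" using npos by (simp add: L_def)
    have "real n powr (-9/10) = (2 powr (-9)) powr (L/10)" unfolding n2L powr_powr by (simp add: mult.commute)
    also have "\<dots> \<le> ((3/4) powr 20) powr (L/10)" using L1 num_ineq by (intro powr_mono2) auto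
    also have "\<dots> = q" unfolding q_def powr_powr by simp
    finally show ?thesis .
  qed
  have "seed_prob n p (\<lambda>A0. bp_gen n E r (nat \<lfloor>log (real d) (log 2 (real n))\<rfloor>) A0 = {0..<n})
      = mu p {0..<n} (\<lambda>S. bp_gen n E r t S = {0..<n})" by (simp add: seed_prob_mu t_def L_def)
  also have "\<dots> \<le> mu p {0..<n} (\<lambda>S. \<forall>c\<in>K. S \<inter> B c \<noteq> {})"
  proof (rule mu_mono)
    show "\<And>v. v \<in> {0..<n} \<Longrightarrow> 0 \<le> p v \<and> p v \<le> 1" using pb by auto
    fix S assume h: "bp_gen n E r t S = {0..<n}"
    show "\<forall>c\<in>K. S \<inter> B c \<noteq> {}"
    proof
      fix c assume "c \<in> K"
      then have "c \<in> bp_gen n E r t S" using K(1) h by auto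
      then have "S \<inter> ball n E c t \<noteq> {}" by (rule active_seed[rotated]) (use r2 in simp)
      then show "S \<inter> B c \<noteq> {}" by (simp add: B_def)
    qed
  qed
  also have "\<dots> = (\<Prod>c\<in>K. 1 - (\<Prod>u\<in>B c. 1 - p u))"
  proof (rule mu_hit_all[OF fK])
    show "finite {0..<n}" by simp
    show "\<forall>c\<in>K. B c \<subseteq> {0..<n}"
    proof
      fix c assume "c \<in> K"
      then have "c < n" using K(1) by auto
      then show "B c \<subseteq> {0..<n}" by (rule Bsub)
    qed
    show "\<forall>c\<in>K. \<forall>c'\<in>K. c \<noteq> c' \<longrightarrow> B c \<inter> B c' = {}" using K(3) by (auto simp: conf_def)
  qed
  also have "\<dots> \<le> (\<Prod>c\<in>K. 1 - q)" using fac by (intro prod_mono) auto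
  also have "\<dots> = (1 - q) ^ card K" by simp
  also have "\<dots> \<le> exp (- q) ^ card K"
    using q0 exp_ge_add_one_self[of "-q"] by (intro power_mono) auto
  also have "\<dots> = exp (- (q * real (card K)))" by (simp add: exp_of_nat_mult[symmetric] mult.commute)
  also have "\<dots> \<le> exp (- (real n powr (-9/10) * real n / (4 * (log 2 (real n))^2)))"
  proof -
    have "real n powr (-9/10) * (real n / (4 * L^2)) \<le> q * real (card K)"
      using qn cardK q0 npos L1 by (intro mult_mono) auto
    then show ?thesis by (simp add: L_def)
  qed
  finally show ?thesis .
qed

theorem proposition1:
  fixes d r :: nat
  assumes "d \<ge> 2" and "r \<ge> 2"
  shows "\<forall>\<epsilon>>0. \<exists>N. \<forall>n\<ge>N. \<forall>E p.
           regular_graph d n E \<longrightarrow> (\<forall>v<n. 0 \<le> p v \<and> p v \<le> 1/4) \<longrightarrow>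
           seed_prob n p (\<lambda>A0. bp_gen n E r (nat \<lfloor>log (real d) (log 2 (real n))\<rfloor>) A0 = {0..<n})
             \<le> \<epsilon>"
proof (intro allI impI)
  fix \<epsilon> :: real assume eps: "\<epsilon> > 0"
  have lim: "((\<lambda>x::real. exp (- (x powr (-9/10) * x / (4 * (log 2 x)^2)))) \<longlongrightarrow> 0) at_top"
    by real_asymp
  then have "eventually (\<lambda>x::real. exp (- (x powr (-9/10) * x / (4 * (log 2 x)^2))) < \<epsilon>) at_top"
    using eps by (simp add: order_tendstoD(2))
  then obtain N0 :: real where N0: "\<And>x. x \<ge> N0 \<Longrightarrow> exp (- (x powr (-9/10) * x / (4 * (log 2 x)^2))) < \<epsilon>"
    by (auto simp: eventually_at_top_linorder)
  show "\<exists>N. \<forall>n\<ge>N. \<forall>E p.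
           regular_graph d n E \<longrightarrow> (\<forall>v<n. 0 \<le> p v \<and> p v \<le> 1/4) \<longrightarrow>
           seed_prob n p (\<lambda>A0. bp_gen n E r (nat \<lfloor>log (real d) (log 2 (real n))\<rfloor>) A0 = {0..<n})
             \<le> \<epsilon>"
  proof (intro exI allI impI)
    fix n :: nat and E and p :: "nat \<Rightarrow> real"
    assume n: "max 2 (nat \<lceil>N0\<rceil>) \<le> n" and reg: "regular_graph d n E"
      and pb: "\<forall>v<n. 0 \<le> p v \<and> p v \<le> 1/4"
    have n2: "n \<ge> 2" using n by simp
    have "real n \<ge> N0" using n by linarith
    then have "exp (- (real n powr (-9/10) * real n / (4 * (log 2 (real n))^2))) < \<epsilon>" by (rule N0)
    moreover have "seed_prob n p (\<lambda>A0. bp_gen n E r (nat \<lfloor>log (real d) (log 2 (real n))\<rfloor>) A0 = {0..<n})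
         \<le> exp (- (real n powr (-9/10) * real n / (4 * (log 2 (real n))^2)))"
      by (rule main_bound) (use assms n2 reg pb in auto)
    ultimately show "seed_prob n p (\<lambda>A0. bp_gen n E r (nat \<lfloor>log (real d) (log 2 (real n))\<rfloor>) A0 = {0..<n}) \<le> \<epsilon>"
      by linarith
  qed
qed

end
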